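(* Let $k\ge1$, let $\lambda,\lambda_1$ be functions $\mathfrak U\to\mathbb N$ with $\lambda(\mathcal U)^k\le\lambda_1(\mathcal U)<|\mathcal U|$ for all $\mathcal U\in\mathfrak U$, and let $R$ be a $k$-place relation such that for each $\mathcal U$, $R[\mathcal U]$ is a relation on a set $A[\mathcal U]\subseteq\mathcal U$ with $|A[\mathcal U]|\le\lambda(\mathcal U)$. Then $Q_R\le_{\mathrm{exp}}Q^{1-1}_{\lambda_1}$.
   Context: Framework: $\mathfrak U$ is a fixed nonempty family of finite sets. A relation $R$ of arity $k$ assigns to each $\mathcal U\in\mathfrak U$ a $k$-place relation $R[\mathcal U]$ on $\mathcal U$. A class $K$ assigns to each $\mathcal U$ a set $K[\mathcal U]$ of $n(K)$-place relations on $\mathcal U$ closed under permutations of $\mathcal U$; $\exists_K=Q_K$ is the second-order quantifier ranging over $K[\mathcal U]$; $Q_R$ is $Q_{K_R}$ where $K_R[\mathcal U]$ is the set of images of $R[\mathcal U]$ under permutations of $\mathcal U$. $Q_{K_1}\le_{\mathrm{exp}}Q_{K_2}$ (expressibility) means there is a formula $\varphi(x_0,\dots,x_{n(K_1)-1},S_0,\dots,S_{m-1})$ of first-order logic extended by the quantifier $Q_{K_2}$, the same for all $\mathcal U\in\mathfrak U$, such that for every $\mathcal U$ and every $R'\in K_1[\mathcal U]$ there are $S_0,\dots,S_{m-1}\in K_2[\mathcal U]$ with $R'=\{\bar a:(\mathcal U,\bar S)\models\varphi(\bar a)\}$. $Q^{1-1}_{\lambda_1}$ is the quantifier over graphs of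 partial one-to-one functions $f$ from $\mathcal U$ to $\mathcal U$ with $|\mathrm{dom}(f)|=\lambda_1(\mathcal U)$. *)

theory Defs
  imports Main
begin

text \<open>Universes are finite sets of elements of type 'a; the fixed family is
  a set of such sets.  An n-place relation on a universe U is a set of lists
  of length n with entries in U.\<close>

type_synonym 'a rel = "'a list set"

type_synonym 'a cls = "'a set \<Rightarrow> 'a rel set"

text \<open>Syntax of first-order logic (with equality) extended by one
  second-order quantifier Q_K.  First-order variables and relation variables
  are named by natural numbers.\<close>
datatype fm =
    Eq nat nat
  | Rel nat "nat list"
  | Neg fm
  | Conj fm fm
  | Ex nat fm
  | QK nat fm

fun fv :: "fm \<Rightarrow> nat set" where
  "fv (Eq i j) = {i, j}"
| "fv (Rel r xs) = set xs"
| "fv (Neg p) = fv p"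
| "fv (Conj p q) = fv p \<union> fv q"
| "fv (Ex x p) = fv p - {x}"
| "fv (QK X p) = fv p"

fun frv :: "fm \<Rightarrow> nat set" where
  "frv (Eq i j) = {}"
| "frv (Rel r xs) = {r}"
| "frv (Neg p) = frv p"
| "frv (Conj p q) = frv p \<union> frv q"
| "frv (Ex x p) = frv p"
| "frv (QK X p) = frv p - {X}"

fun sat :: "'a cls \<Rightarrow> 'a set \<Rightarrow> (nat \<Rightarrow> 'a) \<Rightarrow> (nat \<Rightarrow> 'a rel) \<Rightarrow> fm \<Rightarrow> bool" where
  "sat K U v \<rho> (Eq i j) = (v i = v j)"
| "sat K U v \<rho> (Rel r xs) = (map v xs \<in> \<rho> r)"
| "sat K U v \<rho> (Neg p) = (\<not> sat K U v \<rho> p)"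
| "sat K U v \<rho> (Conj p q) = (sat K U v \<rho> p \<and> sat K U v \<rho> q)"
| "sat K U v \<rho> (Ex x p) = (\<exists>a\<in>U. sat K U (v(x := a)) \<rho> p)"
| "sat K U v \<rho> (QK X p) = (\<exists>S\<in>K U. sat K U v (\<rho>(X := S)) p)"

text \<open>Expressibility Q_{K1} \<le>exp Q_{K2} over the family \<UU>, where n is the
  arity n(K1): one formula \<phi>(x_0..x_{n-1}, S_0..S_{m-1}) works for all
  universes.\<close>
definition expressible :: "'a set set \<Rightarrow> nat \<Rightarrow> 'a cls \<Rightarrow> 'a cls \<Rightarrow> bool" where
  "expressible \<UU> n K1 K2 \<longleftrightarrow>
     (\<exists>\<phi> m. fv \<phi> \<subseteq> {..<n} \<and> frv \<phi> \<subseteq> {..<m} \<and>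
        (\<forall>U\<in>\<UU>. \<forall>R'\<in>K1 U. \<exists>S::'a rel list. length S = m \<and> set S \<subseteq> K2 U \<and>
            R' = {as. length as = n \<and> set as \<subseteq> U \<and>
                      sat K2 U (\<lambda>i. as ! i) (\<lambda>i. S ! i) \<phi>}))"

definition K_R :: "('a set \<Rightarrow> 'a rel) \<Rightarrow> 'a cls" where
  "K_R R U = {map \<pi> ` R U | \<pi>. bij_betw \<pi> U U}"

definition K_11 :: "('a set \<Rightarrow> nat) \<Rightarrow> 'a cls" where
  "K_11 lam1 U = {{[x, f x] | x. x \<in> D} | D f.
      D \<subseteq> U \<and> card D = lam1 U \<and> inj_on f D \<and> f ` D \<subseteq> U}"

end

theory Submission
  imports Defs
begin

lemma fpf_inj:
  assumes "finite P" "finite W" "card P < card W"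
  shows "\<exists>h. inj_on h P \<and> h ` P \<subseteq> W \<and> (\<forall>x\<in>P. h x \<noteq> x)"
  using assms
proof (induction P rule: finite_induct)
  case empty then show ?case by auto
next
  case (insert a P)
  then have "card P < card W" by simp
  with insert obtain h where h: "inj_on h P" "h ` P \<subseteq> W" "\<forall>x\<in>P. h x \<noteq> x" by blast
  have "card (h ` P \<union> {a}) \<le> card (h ` P) + card {a}" by (rule card_Un_le)
  also have "\<dots> \<le> card P + 1" using card_image_le[OF insert.hyps(1), of h] by simp
  finally have c1: "card (h ` P \<union> {a}) \<le> card P + 1" .
  have c2: "card W > card P + 1" using insert by simp
  have "\<not> W \<subseteq> h ` P \<union> {a}"
  proof
    assume "W \<subseteq> h ` P \<union> {a}"
    then have "card W \<le> card (h ` P \<union> {a})" using insert.hyps(1) by (intro card_mono) auto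
    with c1 c2 show False by linarith
  qed
  then obtain w where w: "w \<in> W" "w \<notin> h ` P" "w \<noteq> a" by blast
  have "inj_on (h(a := w)) (insert a P)"
    using h(1) w insert.hyps(2) by (auto simp: inj_on_def)
  moreover have "(h(a := w)) ` (insert a P) \<subseteq> W" using h w insert.hyps(2) by auto
  moreover have "\<forall>x\<in>insert a P. (h(a := w)) x \<noteq> x" using h w by auto
  ultimately show ?case by blast
qed

lemma pad:
  assumes "finite U" "X \<subseteq> U" "inj_on f X" "f ` X \<subseteq> U" "card X \<le> n" "n < card U"
  shows "\<exists>D g. X \<subseteq> D \<and> D \<subseteq> U \<and> card D = n \<and> inj_on g D \<and> g ` D \<subseteq> U
     \<and> (\<forall>x\<in>X. g x = f x) \<and> (\<forall>x\<in>D-X. g x \<noteq> x)"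
proof -
  have fX: "finite X" using assms finite_subset by blast
  have "card (U - X) = card U - card X" using assms fX by (simp add: card_Diff_subset)
  then have "n - card X \<le> card (U - X)" using assms by linarith
  then obtain P where P: "P \<subseteq> U - X" "card P = n - card X" "finite P"
    by (meson obtain_subset_with_card_n)
  define W where "W = U - f ` X"
  have "card W = card U - card X" unfolding W_def
    using assms fX by (simp add: card_Diff_subset card_image)
  then have cPW: "card P < card W" using P assms by linarith
  have fW: "finite W" unfolding W_def using assms(1) by simp
  obtain h where h: "inj_on h P" "h ` P \<subseteq> W" "\<forall>x\<in>P. h x \<noteq> x"
    using fpf_inj[OF P(3) fW cPW] by blast
  define g where "g x = (if x \<in> X then f x else h x)" for x
  have "card (X \<union> P) = n" using P fX assms by (subst card_Un_disjoint) auto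
  moreover have "inj_on g (X \<union> P)"
  proof -
    have "inj_on g X" using assms(3) by (simp add: g_def inj_on_def)
    moreover have "inj_on g P" using h(1) P(1) by (auto simp: g_def inj_on_def)
    moreover have "g ` X \<inter> g ` P = {}" using h(2) P(1) by (auto simp: g_def W_def)
    ultimately show ?thesis by (auto simp: inj_on_Un)
  qed
  moreover have "g ` (X \<union> P) \<subseteq> U" using assms h P by (auto simp: g_def W_def)
  ultimately show ?thesis using P assms h
    by (intro exI[of _ "X \<union> P"] exI[of _ g]) (auto simp: g_def)
qed

lemma K11_mem:
  assumes "D \<subseteq> U" "card D = lm U" "inj_on g D" "g ` D \<subseteq> U"
  shows "{[x, g x] | x. x \<in> D} \<in> K_11 lm U"
  using assms unfolding K_11_def by blast

lemma setenc:
  assumes "finite U" "M \<subseteq> U" "card M \<le> lm U" "lm U < card U"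
  shows "\<exists>G\<in>K_11 lm U. \<forall>x. [x,x] \<in> G \<longleftrightarrow> x \<in> M"
proof -
  obtain D g where Dg: "M \<subseteq> D" "D \<subseteq> U" "card D = lm U" "inj_on g D" "g ` D \<subseteq> U"
     "\<forall>x\<in>M. g x = id x" "\<forall>x\<in>D-M. g x \<noteq> x"
    using pad[of U M id "lm U"] assms by auto
  show ?thesis
    apply (rule bexI[OF _ K11_mem[where lm=lm, OF Dg(2-5)]])
    using Dg by (auto, metis DiffI)
qed

lemma relenc:
  assumes "finite U" "F \<subseteq> U \<times> U"
    and sv: "\<And>x y z. (x,y) \<in> F \<Longrightarrow> (x,z) \<in> F \<Longrightarrow> y = z"
    and ij: "\<And>x y z. (x,z) \<in> F \<Longrightarrow> (y,z) \<in> F \<Longrightarrow> x = y"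
    and "card (Domain F) \<le> lm U" "lm U < card U"
  shows "\<exists>S\<in>K_11 lm U. \<exists>T\<in>K_11 lm U. \<forall>x y. ([x,x] \<in> T \<and> [x,y] \<in> S) \<longleftrightarrow> (x,y) \<in> F"
proof -
  define f where "f x = (THE y. (x,y) \<in> F)" for x
  have fF: "(x, f x) \<in> F" if "x \<in> Domain F" for x
    using that sv unfolding f_def by (metis DomainE theI)
  have XU: "Domain F \<subseteq> U" using assms(2) by auto
  have inj: "inj_on f (Domain F)" using fF ij by (metis inj_onI)
  have fU: "f ` Domain F \<subseteq> U" using fF assms(2) by blast
  obtain D g where Dg: "Domain F \<subseteq> D" "D \<subseteq> U" "card D = lm U" "inj_on g D" "g ` D \<subseteq> U"
     "\<forall>x\<in>Domain F. g x = f x"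
    using pad[OF assms(1) XU inj fU assms(5,6)] by blast
  obtain T where T: "T \<in> K_11 lm U" "\<forall>x. [x,x] \<in> T \<longleftrightarrow> x \<in> Domain F"
    using setenc[where lm=lm, OF assms(1) XU assms(5,6)] by blast
  have "\<forall>x y. ([x,x] \<in> T \<and> [x,y] \<in> {[x, g x] | x. x \<in> D}) \<longleftrightarrow> (x,y) \<in> F"
    using T(2) Dg fF sv by (auto, metis Domain.DomainI, metis Domain.DomainI)
  then show ?thesis using K11_mem[where lm=lm, OF Dg(2-5)] T(1) by blast
qed


fun conjs :: "fm list \<Rightarrow> fm" where
  "conjs [] = Eq 0 0"
| "conjs (p # ps) = Conj p (conjs ps)"

definition All :: "nat \<Rightarrow> fm \<Rightarrow> fm" where "All x p = Neg (Ex x (Neg p))"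
definition Imp :: "fm \<Rightarrow> fm \<Rightarrow> fm" where "Imp p q = Neg (Conj p (Neg q))"

definition pA :: "nat \<Rightarrow> nat" where "pA i = 4*i"
definition pB :: "nat \<Rightarrow> nat" where "pB i = 4*i+1"
definition pC :: "nat \<Rightarrow> nat" where "pC i = 4*i+2"
definition pD :: "nat \<Rightarrow> nat" where "pD i = 4*i+3"

lemma p_lt: "i < k \<Longrightarrow> pA i < 4*k \<and> pB i < 4*k \<and> pC i < 4*k \<and> pD i < 4*k"
  by (auto simp: pA_def pB_def pC_def pD_def)

lemma p_ne: "i < k \<Longrightarrow> pA i \<noteq> 4*k \<and> pB i \<noteq> 4*k \<and> pC i \<noteq> 4*k \<and> pD i \<noteq> 4*k"
  using p_lt by fastforce

lemma p_divmod:
  "pA i div 4 = i" "pA i mod 4 = 0" "pB i div 4 = i" "pB i mod 4 = 1"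
  "pC i div 4 = i" "pC i mod 4 = 2" "pD i div 4 = i" "pD i mod 4 = 3"
  unfolding pA_def pB_def pC_def pD_def by presburger+

definition Hf :: "nat \<Rightarrow> nat \<Rightarrow> fm" where
  "Hf k i = Ex (k+1) (Conj (Conj (Rel (pD i) [i,i]) (Rel (pC i) [i,k+1]))
     (QK (4*k) (Conj (Rel (4*k) [k+1,k+1]) (Conj (Rel (4*k) [k,k])
        (All (k+2) (Imp (Conj (Rel (4*k) [k+2,k+2]) (Neg (Eq (k+2) k)))
            (Ex (k+3) (Conj (Conj (Rel (pB i) [k+2,k+2]) (Rel (pA i) [k+2,k+3]))
                 (Rel (4*k) [k+3,k+3])))))))))"

definition phi :: "nat \<Rightarrow> fm" where
  "phi k = Ex k (conjs (map (Hf k) [0..<k]))"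

lemma sat_conjs: "sat K U v \<rho> (conjs ps) \<longleftrightarrow> (\<forall>p\<in>set ps. sat K U v \<rho> p)"
  by (induction ps) auto

lemma fv_conjs: "fv (conjs ps) \<subseteq> {0} \<union> \<Union>(fv ` set ps)"
  by (induction ps) auto

lemma frv_conjs: "frv (conjs ps) = \<Union>(frv ` set ps)"
  by (induction ps) auto

lemma fv_phi: "0 < k \<Longrightarrow> fv (phi k) \<subseteq> {..<k}"
proof -
  assume k: "0 < k"
  have "fv (Hf k i) \<subseteq> {i, k}" for i by (auto simp: Hf_def All_def Imp_def)
  then show ?thesis using fv_conjs[of "map (Hf k) [0..<k]"] k
    unfolding phi_def by fastforce
qed

lemma frv_phi: "frv (phi k) \<subseteq> {..<4*k}"
proof -
  have h: "i < k \<Longrightarrow> frv (Hf k i) \<subseteq> {..<4*k}" for i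
    using p_lt[of i k] by (auto simp: Hf_def All_def Imp_def)
  show ?thesis unfolding phi_def frv.simps frv_conjs
  proof
    fix x assume "x \<in> \<Union> (frv ` set (map (Hf k) [0..<k]))"
    then obtain i where "i < k" "x \<in> frv (Hf k i)" by auto
    then show "x \<in> {..<4*k}" using h by blast
  qed
qed

lemma sat_Hf:
  assumes "i < k"
  shows "sat K U v \<rho> (Hf k i) \<longleftrightarrow>
    (\<exists>c0\<in>U. ([v i, v i] \<in> \<rho> (pD i) \<and> [v i, c0] \<in> \<rho> (pC i)) \<and>
      (\<exists>G\<in>K U. [c0,c0] \<in> G \<and> [v k, v k] \<in> G \<and>
        (\<forall>x\<in>U. [x,x] \<in> G \<and> x \<noteq> v k \<longrightarrow>
           (\<exists>y\<in>U. ([x,x] \<in> \<rho> (pB i) \<and> [x,y] \<in> \<rho> (pA i)) \<and> [y,y] \<in> G))))"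
  using assms p_ne[OF assms] by (simp add: Hf_def All_def Imp_def) blast

lemma sat_phi:
  "sat K U v \<rho> (phi k) \<longleftrightarrow> (\<exists>c\<in>U. \<forall>i<k.
    (\<exists>c0\<in>U. ([v i, v i] \<in> \<rho> (pD i) \<and> [v i, c0] \<in> \<rho> (pC i)) \<and>
      (\<exists>G\<in>K U. [c0,c0] \<in> G \<and> [c, c] \<in> G \<and>
        (\<forall>x\<in>U. [x,x] \<in> G \<and> x \<noteq> c \<longrightarrow>
           (\<exists>y\<in>U. ([x,x] \<in> \<rho> (pB i) \<and> [x,y] \<in> \<rho> (pA i)) \<and> [y,y] \<in> G)))))"
  (is "_ \<longleftrightarrow> ?R")
proof -
  have "sat K U v \<rho> (phi k) \<longleftrightarrow> (\<exists>c\<in>U. \<forall>i<k. sat K U (v(k:=c)) \<rho> (Hf k i))"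
  proof -
    have e: "\<And>P. (\<forall>x\<in>{0..<k}. P x) = (\<forall>i<k. P i)" by auto
    show ?thesis by (simp add: phi_def sat_conjs e)
  qed
  also have "\<dots> \<longleftrightarrow> ?R"
    apply (rule bex_cong[OF refl])
    apply (rule all_cong)
    apply (subst sat_Hf, assumption)
    apply simp
    done
  finally show ?thesis .
qed


lemma enc_ex: "\<exists>S\<in>A. \<exists>T\<in>A. Q S T \<Longrightarrow> \<exists>p. fst p \<in> A \<and> snd p \<in> A \<and> Q (fst p) (snd p)"
  by force

lemma next_sv:
  fixes col :: "nat \<Rightarrow> 'b"
  assumes "j < a" "col a = col j" "\<forall>l. j < l \<and> l < a \<longrightarrow> col l \<noteq> col j"
    "j < b" "col b = col j" "\<forall>l. j < l \<and> l < b \<longrightarrow> col l \<noteq> col j"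
  shows "a = b"
  using assms by (metis linorder_neqE_nat)

lemma next_inj:
  fixes col :: "nat \<Rightarrow> 'b"
  assumes "j < a" "col a = col j" "\<forall>l. j < l \<and> l < a \<longrightarrow> col l \<noteq> col j"
    "j' < a" "col a = col j'" "\<forall>l. j' < l \<and> l < a \<longrightarrow> col l \<noteq> col j'"
  shows "j = j'"
  using assms by (metis linorder_neqE_nat)

lemma first_eq:
  fixes col :: "nat \<Rightarrow> 'b"
  assumes "\<forall>l<j. col l \<noteq> col j" "\<forall>l<j'. col l \<noteq> col j'" "col j = col j'"
  shows "j = j'"
  using assms by (metis linorder_neqE_nat)

theorem claim3p7:
  fixes \<UU> :: "'a set set" and k :: nat
    and lam lam1 :: "'a set \<Rightarrow> nat"
    and R :: "'a set \<Rightarrow> 'a rel" and A :: "'a set \<Rightarrow> 'a set"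
  assumes "\<UU> \<noteq> {}"
    and "\<forall>U\<in>\<UU>. finite U"
    and "k \<ge> 1"
    and "\<forall>U\<in>\<UU>. lam U ^ k \<le> lam1 U \<and> lam1 U < card U"
    and "\<forall>U\<in>\<UU>. A U \<subseteq> U \<and> card (A U) \<le> lam U"
    and "\<forall>U\<in>\<UU>. R U \<subseteq> {xs. length xs = k \<and> set xs \<subseteq> A U}"
  shows "expressible \<UU> k (K_R R) (K_11 lam1)"
proof -
  have k0: "0 < k" using assms(3) by simp
  have main: "\<forall>U\<in>\<UU>. \<forall>R'\<in>K_R R U. \<exists>S::'a rel list. length S = 4*k \<and> set S \<subseteq> K_11 lam1 U \<and>
      R' = {as. length as = k \<and> set as \<subseteq> U \<and> sat (K_11 lam1) U (\<lambda>i. as ! i) (\<lambda>i. S ! i) (phi k)}"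
  proof (intro ballI)
    fix U R' assume U: "U \<in> \<UU>" and R': "R' \<in> K_R R U"
    have fin: "finite U" using assms(2) U by blast
    have lam: "lam U ^ k \<le> lam1 U" "lam1 U < card U" using assms(4) U by auto
    have AU: "A U \<subseteq> U" "card (A U) \<le> lam U" using assms(5) U by auto
    have RU: "R U \<subseteq> {xs. length xs = k \<and> set xs \<subseteq> A U}" using assms(6) U by auto
    obtain \<pi> where pi: "bij_betw \<pi> U U" "R' = map \<pi> ` R U" using R' unfolding K_R_def by blast
    have piU: "\<pi> ` U = U" using pi(1) bij_betw_imp_surj_on by blast
    have R'sub: "length xs = k \<and> set xs \<subseteq> U" if xs: "xs \<in> R'" for xs
    proof -
      obtain x where x: "x \<in> R U" "xs = map \<pi> x" using xs pi(2) by blast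
      then have "set x \<subseteq> A U" using RU by auto
      then have "set x \<subseteq> U" using AU(1) by blast
      then have "set xs \<subseteq> \<pi> ` U" using x by auto
      then show ?thesis using x RU piU by auto
    qed
    have finA: "finite (A U)" using fin AU finite_subset by blast
    have finL: "finite {xs. set xs \<subseteq> A U \<and> length xs = k}" by (rule finite_lists_length_eq[OF finA])
    have RU': "R U \<subseteq> {xs. set xs \<subseteq> A U \<and> length xs = k}" using RU by auto
    have finRU: "finite (R U)" using RU' finL finite_subset by blast
    have finR': "finite R'" using pi finRU by simp
    have "card R' \<le> card (R U)" using pi card_image_le finRU by auto
    also have "card (R U) \<le> card {xs. set xs \<subseteq> A U \<and> length xs = k}"
      by (rule card_mono[OF finL RU'])
    also have "\<dots> = card (A U) ^ k" by (rule card_lists_length_eq[OF finA])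
    also have "\<dots> \<le> lam U ^ k" by (rule power_mono) (use AU in auto)
    finally have cR: "card R' \<le> lam1 U" using lam by linarith
    define N where "N = card R'"
    obtain L where L: "set L = R'" "distinct L" using finite_distinct_list[OF finR'] by blast
    have lenL: "length L = N" using L distinct_card N_def by metis
    have "N \<le> card U" using cR lam N_def by linarith
    then obtain C where C: "C \<subseteq> U" "card C = N" "finite C" by (rule obtain_subset_with_card_n)
    obtain cs where cs: "set cs = C" "distinct cs" using finite_distinct_list[OF C(3)] by blast
    have lencs: "length cs = N" using cs C distinct_card by metis
    have csU: "cs ! j \<in> U" if "j < N" for j
    proof -
      have "cs ! j \<in> set cs" using that lencs by simp
      then show ?thesis using cs(1) C(1) by blast
    qed
    have cs_inj: "cs ! j = cs ! j' \<longleftrightarrow> j = j'" if "j < N" "j' < N" for j j'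
      using nth_eq_iff_index_eq cs lencs that by metis
    have Lmem: "L ! j \<in> R'" if "j < N" for j
    proof -
      have "L ! j \<in> set L" using that lenL by simp
      then show ?thesis using L(1) by simp
    qed
    have LU: "L ! j ! i \<in> U" if "j < N" "i < k" for j i
    proof -
      have 1: "length (L ! j) = k" "set (L ! j) \<subseteq> U" using R'sub[OF Lmem[OF that(1)]] by auto
      have "L ! j ! i \<in> set (L ! j)" using 1(1) that(2) by simp
      then show ?thesis using 1(2) by blast
    qed
    have NK: "N \<le> lam1 U" using cR N_def by simp

    define F where "F i = {(cs!j, cs!j') | j j'. j < j' \<and> j' < N \<and> L!j'!i = L!j!i \<and>
        (\<forall>l. j < l \<and> l < j' \<longrightarrow> L!l!i \<noteq> L!j!i)}" for i
    define G where "G i = {(L!j!i, cs!j) | j. j < N \<and> (\<forall>l<j. L!l!i \<noteq> L!j!i)}" for i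

    have encF: "\<exists>S\<in>K_11 lam1 U. \<exists>T\<in>K_11 lam1 U. \<forall>x y. ([x,x] \<in> T \<and> [x,y] \<in> S) \<longleftrightarrow> (x,y) \<in> F i"
      if "i < k" for i
    proof (rule relenc[OF fin])
      show "F i \<subseteq> U \<times> U" using csU by (auto simp: F_def)
      show "y = z" if h: "(x,y) \<in> F i" "(x,z) \<in> F i" for x y z
      proof -
        obtain j a where 1: "x = cs!j" "y = cs!a" "j < a" "a < N" "L!a!i = L!j!i"
          "\<forall>l. j < l \<and> l < a \<longrightarrow> L!l!i \<noteq> L!j!i" using h(1) unfolding F_def by blast
        obtain j' b where 2: "x = cs!j'" "z = cs!b" "j' < b" "b < N" "L!b!i = L!j'!i"
          "\<forall>l. j' < l \<and> l < b \<longrightarrow> L!l!i \<noteq> L!j'!i" using h(2) unfolding F_def by blast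
        have "j = j'" using 1 2 cs_inj by (metis order.strict_trans)
        then have "a = b" using next_sv[of j a "\<lambda>l. L!l!i" b] 1 2 by blast
        then show ?thesis using 1 2 by simp
      qed
      show "x = y" if h: "(x,z) \<in> F i" "(y,z) \<in> F i" for x y z
      proof -
        obtain j a where 1: "x = cs!j" "z = cs!a" "j < a" "a < N" "L!a!i = L!j!i"
          "\<forall>l. j < l \<and> l < a \<longrightarrow> L!l!i \<noteq> L!j!i" using h(1) unfolding F_def by blast
        obtain j' b where 2: "y = cs!j'" "z = cs!b" "j' < b" "b < N" "L!b!i = L!j'!i"
          "\<forall>l. j' < l \<and> l < b \<longrightarrow> L!l!i \<noteq> L!j'!i" using h(2) unfolding F_def by blast
        have "a = b" using 1 2 cs_inj by metis
        then have "j = j'" using next_inj[of j a "\<lambda>l. L!l!i" j'] 1 2 by blast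
        then show ?thesis using 1 2 by simp
      qed
      have "Domain (F i) \<subseteq> C" using cs lencs by (auto simp: F_def)
      then have "card (Domain (F i)) \<le> N" using C card_mono by metis
      then show "card (Domain (F i)) \<le> lam1 U" using NK by simp
      show "lam1 U < card U" by (rule lam(2))
    qed
    have encG: "\<exists>S\<in>K_11 lam1 U. \<exists>T\<in>K_11 lam1 U. \<forall>x y. ([x,x] \<in> T \<and> [x,y] \<in> S) \<longleftrightarrow> (x,y) \<in> G i"
      if "i < k" for i
    proof (rule relenc[OF fin])
      show "G i \<subseteq> U \<times> U" using csU LU that by (auto simp: G_def)
      show "y = z" if h: "(x,y) \<in> G i" "(x,z) \<in> G i" for x y z
      proof -
        obtain j where 1: "x = L!j!i" "y = cs!j" "j < N" "\<forall>l<j. L!l!i \<noteq> L!j!i"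
          using h(1) unfolding G_def by blast
        obtain j' where 2: "x = L!j'!i" "z = cs!j'" "j' < N" "\<forall>l<j'. L!l!i \<noteq> L!j'!i"
          using h(2) unfolding G_def by blast
        have "j = j'" using first_eq[of j "\<lambda>l. L!l!i" j'] 1 2 by metis
        then show ?thesis using 1 2 by simp
      qed
      show "x = y" if h: "(x,z) \<in> G i" "(y,z) \<in> G i" for x y z
      proof -
        obtain j where 1: "x = L!j!i" "z = cs!j" "j < N"
          using h(1) unfolding G_def by blast
        obtain j' where 2: "y = L!j'!i" "z = cs!j'" "j' < N"
          using h(2) unfolding G_def by blast
        have "j = j'" using 1 2 cs_inj by metis
        then show ?thesis using 1 2 by simp
      qed
      have "Domain (G i) \<subseteq> (\<lambda>j. L!j!i) ` {..<N}" by (auto simp: G_def)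
      then have "card (Domain (G i)) \<le> card ((\<lambda>j. L!j!i) ` {..<N})" by (rule card_mono[rotated]) simp
      also have "\<dots> \<le> card {..<N}" by (rule card_image_le) simp
      finally have "card (Domain (G i)) \<le> card {..<N}" .
      then show "card (Domain (G i)) \<le> lam1 U" using NK by simp
      show "lam1 U < card U" by (rule lam(2))
    qed

    define encP where "encP X p \<longleftrightarrow> fst p \<in> K_11 lam1 U \<and> snd p \<in> K_11 lam1 U \<and>
       (\<forall>x y. ([x,x] \<in> snd p \<and> [x,y] \<in> fst p) \<longleftrightarrow> (x,y) \<in> X)" for X and p :: "'a rel \<times> 'a rel"
    have exF: "\<exists>p. i < k \<longrightarrow> encP (F i) p" for i
    proof (cases "i < k")
      case True
      show ?thesis using enc_ex[OF encF[OF True]] by (simp add: encP_def)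
    qed simp
    have exG: "\<exists>p. i < k \<longrightarrow> encP (G i) p" for i
    proof (cases "i < k")
      case True
      show ?thesis using enc_ex[OF encG[OF True]] by (simp add: encP_def)
    qed simp
    have "\<exists>PF. \<forall>i. i < k \<longrightarrow> encP (F i) (PF i)" by (rule choice) (use exF in blast)
    then obtain PF where PF: "\<forall>i. i < k \<longrightarrow> encP (F i) (PF i)" by blast
    have "\<exists>PG. \<forall>i. i < k \<longrightarrow> encP (G i) (PG i)" by (rule choice) (use exG in blast)
    then obtain PG where PG: "\<forall>i. i < k \<longrightarrow> encP (G i) (PG i)" by blast
    define sel where "sel p = [fst (PF (p div 4)), snd (PF (p div 4)), fst (PG (p div 4)), snd (PG (p div 4))] ! (p mod 4)" for p
    define S where "S = map sel [0..<4*k]"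
    have lenS: "length S = 4*k" by (simp add: S_def)
    have SA: "S ! pA i = fst (PF i)" if "i < k" for i
      using p_lt[OF that] by (simp add: S_def sel_def p_divmod)
    have SB: "S ! pB i = snd (PF i)" if "i < k" for i
      using p_lt[OF that] by (simp add: S_def sel_def p_divmod)
    have SC: "S ! pC i = fst (PG i)" if "i < k" for i
      using p_lt[OF that] by (simp add: S_def sel_def p_divmod)
    have SD: "S ! pD i = snd (PG i)" if "i < k" for i
      using p_lt[OF that] by (simp add: S_def sel_def p_divmod)
    have setS: "set S \<subseteq> K_11 lam1 U"
    proof
      fix X assume "X \<in> set S"
      then obtain p where p: "p < 4*k" "X = sel p" by (auto simp: S_def)
      then have i: "p div 4 < k" by simp
      have "p mod 4 = 0 \<or> p mod 4 = 1 \<or> p mod 4 = 2 \<or> p mod 4 = 3" by arith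
      then show "X \<in> K_11 lam1 U"
        using PF PG i p(2) by (auto simp: sel_def encP_def)
    qed
    have decF: "([x,x] \<in> S ! pB i \<and> [x,y] \<in> S ! pA i) \<longleftrightarrow> (x,y) \<in> F i" if "i < k" for i x y
      using PF SA[OF that] SB[OF that] that by (simp add: encP_def)
    have decG: "([x,x] \<in> S ! pD i \<and> [x,y] \<in> S ! pC i) \<longleftrightarrow> (x,y) \<in> G i" if "i < k" for i x y
      using PG SC[OF that] SD[OF that] that by (simp add: encP_def)
    define Good where "Good as \<longleftrightarrow> (\<exists>c\<in>U. \<forall>i<k. \<exists>c0\<in>U. (as!i, c0) \<in> G i \<and>
       (\<exists>Gr\<in>K_11 lam1 U. [c0,c0] \<in> Gr \<and> [c,c] \<in> Gr \<and>
          (\<forall>x\<in>U. [x,x] \<in> Gr \<and> x \<noteq> c \<longrightarrow> (\<exists>y\<in>U. (x,y) \<in> F i \<and> [y,y] \<in> Gr))))" for as :: "'a list"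
    have satG: "sat (K_11 lam1) U (\<lambda>i. as ! i) (\<lambda>i. S ! i) (phi k) \<longleftrightarrow> Good as" for as
      unfolding sat_phi Good_def using decF decG by simp
    have eq: "R' = {as. length as = k \<and> set as \<subseteq> U \<and> sat (K_11 lam1) U (\<lambda>i. as ! i) (\<lambda>i. S ! i) (phi k)}"
    proof (intro equalityI subsetI)
      fix as assume asR: "as \<in> R'"
      then obtain j where j: "j < N" "L ! j = as" using L lenL by (metis in_set_conv_nth)
      have "Good as" unfolding Good_def
      proof (rule bexI[of _ "cs!j"], intro allI impI)
        show "cs!j \<in> U" using csU j by simp
        fix i assume i: "i < k"
        define b where "b = as ! i"
        have Pj: "L!j!i = b" using j b_def by simp
        define j0 where "j0 = (LEAST l. L!l!i = b)"
        have j0a: "L!j0!i = b" unfolding j0_def by (rule LeastI[of _ j]) (rule Pj)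
        have j0b: "j0 \<le> j" unfolding j0_def by (rule Least_le) (rule Pj)
        have j0c: "\<forall>l<j0. L!l!i \<noteq> b" unfolding j0_def using not_less_Least by blast
        note j0 = j0a j0b j0c
        have j0N: "j0 < N" using j0 j by simp
        have "(L!j0!i, cs!j0) \<in> G i" unfolding G_def using j0N j0 by auto
        then have inG: "(as!i, cs!j0) \<in> G i" using j0(1) b_def by simp
        define M where "M = {cs!l | l. j0 \<le> l \<and> l \<le> j \<and> L!l!i = b}"
        have MC: "M \<subseteq> C"
        proof
          fix x assume "x \<in> M"
          then obtain l where "x = cs!l" "l \<le> j" unfolding M_def by blast
          then have "x \<in> set cs" using j lencs by simp
          then show "x \<in> C" using cs by simp
        qed
        have "card M \<le> lam1 U" using card_mono[OF C(3) MC] C(2) NK by simp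
        moreover have "M \<subseteq> U" using MC C(1) by blast
        ultimately obtain Gr where Gr: "Gr \<in> K_11 lam1 U" "\<forall>x. [x,x] \<in> Gr \<longleftrightarrow> x \<in> M"
          using setenc[where lm=lam1, OF fin _ _ lam(2)] by blast
        have c1: "cs!j0 \<in> M" unfolding M_def using j0 by auto
        have c2: "cs!j \<in> M" unfolding M_def using j0 Pj by auto
        have cl: "\<forall>x\<in>U. [x,x] \<in> Gr \<and> x \<noteq> cs!j \<longrightarrow> (\<exists>y\<in>U. (x,y) \<in> F i \<and> [y,y] \<in> Gr)"
        proof (intro ballI impI)
          fix x assume x: "x \<in> U" "[x,x] \<in> Gr \<and> x \<noteq> cs!j"
          then have xM: "x \<in> M" "x \<noteq> cs!j" using Gr by auto
          then obtain l where l: "x = cs!l" "j0 \<le> l" "l \<le> j" "L!l!i = b" unfolding M_def by blast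
          have "l \<noteq> j" using l xM by auto
          then have lj: "l < j" using l by simp
          define l' where "l' = (LEAST m. l < m \<and> L!m!i = b)"
          have P: "l < j \<and> L!j!i = b" using lj Pj by simp
          have l'a: "l < l' \<and> L!l'!i = b" unfolding l'_def by (rule LeastI[of _ j]) (rule P)
          have l'b: "l' \<le> j" unfolding l'_def by (rule Least_le) (rule P)
          have l'c: "\<forall>m. m < l' \<longrightarrow> \<not> (l < m \<and> L!m!i = b)" unfolding l'_def using not_less_Least by blast
          have l': "l < l'" "L!l'!i = b" "l' \<le> j" using l'a l'b by auto
          have l'2: "\<forall>m. l < m \<and> m < l' \<longrightarrow> L!m!i \<noteq> L!l!i" using l'c l(4) by auto
          have l'N: "l' < N" using l' j by simp
          have l'3: "L!l'!i = L!l!i" using l' l by simp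
          have "(cs!l, cs!l') \<in> F i" unfolding F_def using l'(1) l'N l'3 l'2 by blast
          moreover have "cs!l' \<in> M" unfolding M_def using l' l by auto
          moreover have "cs!l' \<in> U" using csU l'N by simp
          ultimately show "\<exists>y\<in>U. (x,y) \<in> F i \<and> [y,y] \<in> Gr" using Gr l(1) by blast
        qed
        show "\<exists>c0\<in>U. (as!i, c0) \<in> G i \<and> (\<exists>Gr\<in>K_11 lam1 U. [c0,c0] \<in> Gr \<and> [cs!j,cs!j] \<in> Gr \<and>
          (\<forall>x\<in>U. [x,x] \<in> Gr \<and> x \<noteq> cs!j \<longrightarrow> (\<exists>y\<in>U. (x,y) \<in> F i \<and> [y,y] \<in> Gr)))"
          using inG csU[OF j0N] Gr c1 c2 cl by blast
      qed
      then show "as \<in> {as. length as = k \<and> set as \<subseteq> U \<and> sat (K_11 lam1) U (\<lambda>i. as ! i) (\<lambda>i. S ! i) (phi k)}"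
        using R'sub[OF asR] satG by simp
    next
      fix as assume "as \<in> {as. length as = k \<and> set as \<subseteq> U \<and> sat (K_11 lam1) U (\<lambda>i. as ! i) (\<lambda>i. S ! i) (phi k)}"
      then have las: "length as = k" "Good as" using satG by auto
      then obtain c where c: "c \<in> U" and H: "\<forall>i<k. \<exists>c0\<in>U. (as!i, c0) \<in> G i \<and>
       (\<exists>Gr\<in>K_11 lam1 U. [c0,c0] \<in> Gr \<and> [c,c] \<in> Gr \<and>
          (\<forall>x\<in>U. [x,x] \<in> Gr \<and> x \<noteq> c \<longrightarrow> (\<exists>y\<in>U. (x,y) \<in> F i \<and> [y,y] \<in> Gr)))"
        unfolding Good_def by blast
      have key: "\<exists>j<N. c = cs!j \<and> L!j!i = as!i" if i: "i < k" for i
      proof -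
        obtain c0 Gr where c0: "(as!i, c0) \<in> G i" "[c0,c0] \<in> Gr"
          and cl: "\<forall>x\<in>U. [x,x] \<in> Gr \<and> x \<noteq> c \<longrightarrow> (\<exists>y\<in>U. (x,y) \<in> F i \<and> [y,y] \<in> Gr)"
          using H i by blast
        obtain j0 where j0: "as!i = L!j0!i" "c0 = cs!j0" "j0 < N" using c0(1) unfolding G_def by blast
        have ind: "\<And>l. l < N \<Longrightarrow> [cs!l, cs!l] \<in> Gr \<Longrightarrow> L!l!i = as!i \<Longrightarrow> \<exists>j<N. c = cs!j \<and> L!j!i = as!i"
        proof -
          fix l
          show "l < N \<Longrightarrow> [cs!l, cs!l] \<in> Gr \<Longrightarrow> L!l!i = as!i \<Longrightarrow> \<exists>j<N. c = cs!j \<and> L!j!i = as!i"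
          proof (induction l rule: measure_induct_rule[where f="\<lambda>l. N - l"])
            case (less l)
            show ?case
            proof (cases "cs!l = c")
              case True then show ?thesis using less.prems by blast
            next
              case False
              then obtain y where y: "y \<in> U" "(cs!l, y) \<in> F i" "[y,y] \<in> Gr"
                using cl csU[OF less.prems(1)] less.prems(2) by blast
              then obtain a b where ab: "cs!l = cs!a" "y = cs!b" "a < b" "b < N" "L!b!i = L!a!i"
                unfolding F_def by blast
              have "a = l" using ab less.prems(1) cs_inj by (metis order.strict_trans)
              then have "N - b < N - l" "L!b!i = as!i" using ab less.prems by auto
              then show ?thesis using less.IH[of b] ab y by simp
            qed
          qed
        qed
        show ?thesis using ind[of j0] j0 c0(2) by simp
      qed
      obtain j where j: "j < N" "c = cs!j" using key[of 0] k0 by blast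
      have coord: "L!j!i = as!i" if ik: "i < k" for i
      proof -
        obtain j' where "j' < N" "c = cs!j'" "L!j'!i = as!i" using key[OF ik] by blast
        then show ?thesis using j cs_inj by metis
      qed
      have "length (L!j) = k" using R'sub[OF Lmem[OF j(1)]] by simp
      then have "L!j = as" using coord las(1) by (intro nth_equalityI) auto
      then show "as \<in> R'" using Lmem[OF j(1)] by simp
    qed
    show "\<exists>S::'a rel list. length S = 4*k \<and> set S \<subseteq> K_11 lam1 U \<and>
      R' = {as. length as = k \<and> set as \<subseteq> U \<and> sat (K_11 lam1) U (\<lambda>i. as ! i) (\<lambda>i. S ! i) (phi k)}"
      by (intro exI[of _ S] conjI lenS setS eq)
  qed
  show ?thesis unfolding expressible_def
  proof (intro exI[of _ "phi k"] exI[of _ "4*k"] conjI)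
    show "fv (phi k) \<subseteq> {..<k}" by (rule fv_phi[OF k0])
    show "frv (phi k) \<subseteq> {..<4*k}" by (rule frv_phi)
  qed (rule main)
qed

end
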